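(* Let $X$ be a standard conic bundle over a field $k$ with $n$ geometrically degenerate fibers, and let $G\subseteq W(\mathsf D_n)$ be its splitting group, i.e. the (finite) image of the Galois representation $\rho:\mathrm{Gal}(\bar k/k)\to \mathrm{Aut}_0(\mathrm{Pic}(\bar X))$. Let $G_2$ be a Sylow $2$-subgroup of $G$. Then $G$ satisfies the (H1) condition if and only if $G_2$ satisfies the (H1) condition.
   Context: A standard conic bundle $\pi:X\to\mathbb P^1$ over $k$ is a geometrically rational surface whose general fiber is a smooth conic and which has, over $\bar k$, $n$ degenerate fibers, each a union of two intersecting lines $q_j^+\cup q_j^-$. $\bar X=X\times_k\bar k$. $\mathrm{Aut}_0(\mathrm{Pic}(\bar X))$ denotes the automorphisms of $\mathrm{Pic}(\bar X)$ preserving the intersection form and $K_X$; the Galois action factors through the Weyl group $W(\mathsf D_n)$ (signed permutations of the pairs $q_j^\pm$ with an even number of sign changes). A finite group $H$ acting on $\mathrm{Pic}(\bar X)$ is said to satisfy the (H1) condition if $\mathrm H^1(H',\mathrm{Pic}(\bar X))=0$ for every subgroup $H'\subseteq H$. *)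

theory Defs
  imports "HOL-Algebra.Group" "HOL-Combinatorics.Permutations"
begin

text \<open>Model of Pic of the geometric surface of a standard conic bundle with n degenerate
fibres: the free Z-module of rank n+2 with basis F (fibre class), S (a section class),
E_0, ..., E_(n-1), where q_j^- = E_j and q_j^+ = F - E_j are the two components of
the j-th degenerate fibre.  An element is a function nat => int; coordinate 0 is the
coefficient of F, coordinate 1 that of S, coordinate j+2 that of E_j; all other
coordinates vanish.\<close>

type_synonym pic = "nat \<Rightarrow> int"

definition picL :: "nat \<Rightarrow> pic set" where
  "picL n = {v. \<forall>k. n + 2 \<le> k \<longrightarrow> v k = 0}"

definition bv :: "nat \<Rightarrow> pic" where
  "bv i = (\<lambda>k. if k = i then 1 else 0)"

text \<open>Action of the signed permutation (sigma, s) of W(D_n): sigma permutes the fibres,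
s (of even cardinality) is the set of fibres j whose components are swapped:
q_j^- goes to q_(sigma j)^- if j is not in s and to q_(sigma j)^+ if j is in s.
F is fixed; the image of S is forced by K-invariance (2S = -K - (e+2)F + sum E_j).\<close>

definition imgE :: "(nat \<Rightarrow> nat) \<Rightarrow> nat set \<Rightarrow> nat \<Rightarrow> pic" where
  "imgE \<sigma> s j = (if j \<in> s then (\<lambda>k. bv 0 k - bv (\<sigma> j + 2) k) else bv (\<sigma> j + 2))"

definition imgS :: "(nat \<Rightarrow> nat) \<Rightarrow> nat set \<Rightarrow> pic" where
  "imgS \<sigma> s = (\<lambda>k. bv 1 k + int (card s div 2) * bv 0 k - (\<Sum>j\<in>s. bv (\<sigma> j + 2) k))"

definition wD_map :: "nat \<Rightarrow> (nat \<Rightarrow> nat) \<Rightarrow> nat set \<Rightarrow> pic \<Rightarrow> pic" where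
  "wD_map n \<sigma> s v = (\<lambda>k. v 0 * bv 0 k + v 1 * imgS \<sigma> s k
                          + (\<Sum>j<n. v (j + 2) * imgE \<sigma> s j k))"

definition WD :: "nat \<Rightarrow> (pic \<Rightarrow> pic) set" where
  "WD n = {wD_map n \<sigma> s | \<sigma> s. \<sigma> permutes {..<n} \<and> s \<subseteq> {..<n} \<and> even (card s)}"

definition WDgrp :: "nat \<Rightarrow> (pic \<Rightarrow> pic) monoid" where
  "WDgrp n = \<lparr>carrier = WD n, monoid.mult = (\<circ>), monoid.one = wD_map n id {}\<rparr>"

definition H1_vanishes :: "nat \<Rightarrow> (pic \<Rightarrow> pic) set \<Rightarrow> bool" where
  "H1_vanishes n H \<longleftrightarrow>
     (\<forall>f. (\<forall>g\<in>H. f g \<in> picL n) \<and>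
          (\<forall>g\<in>H. \<forall>h\<in>H. f (g \<circ> h) = (\<lambda>k. f g k + g (f h) k))
        \<longrightarrow> (\<exists>m\<in>picL n. \<forall>g\<in>H. f g = (\<lambda>k. g m k - m k)))"

definition H1_condition :: "nat \<Rightarrow> (pic \<Rightarrow> pic) set \<Rightarrow> bool" where
  "H1_condition n H \<longleftrightarrow>
     (\<forall>H'. subgroup H' (WDgrp n) \<and> H' \<subseteq> H \<longrightarrow> H1_vanishes n H')"

definition sylow2 :: "nat \<Rightarrow> (pic \<Rightarrow> pic) set \<Rightarrow> (pic \<Rightarrow> pic) set \<Rightarrow> bool" where
  "sylow2 n P G \<longleftrightarrow> subgroup P (WDgrp n) \<and> P \<subseteq> G \<and>
     (\<exists>a. card P = 2 ^ a \<and> 2 ^ a dvd card G \<and> \<not> 2 ^ Suc a dvd card G)"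

end

theory Submission
  imports Defs "HOL-Algebra.Group_Action" "HOL-Algebra.Left_Coset"
begin


declare add_2_eq_Suc[simp del] add_2_eq_Suc'[simp del]

lemma bv_apply: "bv i k = (if k = i then 1 else 0)" by (simp add: bv_def)

lemma imgE_apply: "imgE \<sigma> s j k = (if j \<in> s then bv 0 k - bv (\<sigma> j + 2) k else bv (\<sigma> j + 2) k)"
  by (simp add: imgE_def)

lemma wd_c0:
  assumes "\<sigma> permutes {..<n}" "s \<subseteq> {..<n}"
  shows "wD_map n \<sigma> s v 0 = v 0 + int (card s div 2) * v 1 + (\<Sum>j\<in>s. v (j+2))"
proof -
  have "(\<Sum>j<n. v (j + 2) * imgE \<sigma> s j 0) = (\<Sum>j<n. if j \<in> s then v (j+2) else 0)"
    by (rule sum.cong) (auto simp: imgE_apply bv_def)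
  also have "\<dots> = (\<Sum>j\<in>{..<n} \<inter> s. v (j+2))" by (simp add: sum.inter_restrict)
  also have "{..<n} \<inter> s = s" using assms(2) by blast
  finally show ?thesis unfolding wD_map_def imgS_def by (simp add: bv_def)
qed

lemma wd_c1:
  shows "wD_map n \<sigma> s v 1 = v 1"
proof -
  have "(\<Sum>j<n. v (j + 2) * imgE \<sigma> s j 1) = 0"
    by (rule sum.neutral) (auto simp: imgE_apply bv_apply)
  then show ?thesis unfolding wD_map_def imgS_def by (simp add: bv_apply)
qed

lemma wd_cE:
  assumes "\<sigma> permutes {..<n}" "s \<subseteq> {..<n}" "j < n"
  shows "wD_map n \<sigma> s v (\<sigma> j + 2) = (if j \<in> s then - v 1 - v (j+2) else v (j+2))"
proof -
  have inj: "\<And>i. i < n \<Longrightarrow> (\<sigma> i = \<sigma> j) = (i = j)"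
    using assms(1,3) by (metis lessThan_iff permutes_inj_on inj_on_eq_iff)
  have inj2: "\<And>i. i < n \<Longrightarrow> (\<sigma> j = \<sigma> i) = (i = j)" using inj by metis
  have "(\<Sum>i<n. v (i + 2) * imgE \<sigma> s i (\<sigma> j + 2)) = (\<Sum>i<n. if i = j then (if j \<in> s then - v (j+2) else v (j+2)) else 0)"
    by (rule sum.cong) (auto simp: imgE_apply bv_def inj inj2)
  also have "\<dots> = (if j \<in> s then - v (j+2) else v (j+2))" using assms(3) by simp
  finally have A: "(\<Sum>i<n. v (i + 2) * imgE \<sigma> s i (\<sigma> j + 2)) = (if j \<in> s then - v (j+2) else v (j+2))" .
  have "(\<Sum>i\<in>s. bv (\<sigma> i + 2) (\<sigma> j + 2)) = (\<Sum>i\<in>s. if i = j then 1 else 0)"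
    by (rule sum.cong) (use assms(2) in \<open>auto simp: bv_def inj inj2\<close>)
  also have "\<dots> = (if j \<in> s then 1 else 0)" using finite_subset[OF assms(2)] by (simp add: sum.delta)
  finally have B: "(\<Sum>i\<in>s. bv (\<sigma> i + 2) (\<sigma> j + 2)) = (if j \<in> s then 1 else 0)" .
  show ?thesis unfolding wD_map_def imgS_def using A B by (simp add: bv_def)
qed

lemma wd_cout:
  assumes "\<sigma> permutes {..<n}" "s \<subseteq> {..<n}" "n + 2 \<le> k"
  shows "wD_map n \<sigma> s v k = 0"
proof -
  have lt: "\<And>i. i < n \<Longrightarrow> \<sigma> i < n" using assms(1) permutes_in_image[OF assms(1)] by simp
  have "(\<Sum>i<n. v (i + 2) * imgE \<sigma> s i k) = 0"
    by (rule sum.neutral) (use assms(3) lt in \<open>fastforce simp: imgE_apply bv_def\<close>)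
  moreover have "(\<Sum>i\<in>s. bv (\<sigma> i + 2) k) = 0"
    by (rule sum.neutral) (use assms lt in \<open>fastforce simp: bv_def\<close>)
  ultimately show ?thesis unfolding wD_map_def imgS_def using assms(3) by (simp add: bv_def)
qed

lemma pic_ext_perm:
  fixes u w :: pic
  assumes "\<tau> permutes {..<n}" "u 0 = w 0" "u 1 = w 1"
    "\<And>j. j < n \<Longrightarrow> u (\<tau> j + 2) = w (\<tau> j + 2)"
    "\<And>k. n + 2 \<le> k \<Longrightarrow> u k = w k"
  shows "u = w"
proof
  fix k
  show "u k = w k"
  proof (cases "k < 2")
    case True
    then have "k = 0 \<or> k = 1" by auto
    then show ?thesis using assms(2,3) by auto
  next
    case False
    show ?thesis
    proof (cases "n + 2 \<le> k")
      case True then show ?thesis using assms(5) by auto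
    next
      case F2: False
      then have "k - 2 \<in> {..<n}" using False by auto
      then obtain j where j: "j \<in> {..<n}" "\<tau> j = k - 2"
        using permutes_image[OF assms(1)] by (metis imageE)
      then have "k = \<tau> j + 2" using False by auto
      then show ?thesis using assms(4)[of j] j by simp
    qed
  qed
qed

definition compset :: "nat \<Rightarrow> (nat \<Rightarrow> nat) \<Rightarrow> nat set \<Rightarrow> nat set \<Rightarrow> nat set" where
  "compset n \<tau> t s = {j. j < n \<and> ((j \<in> t) \<noteq> (\<tau> j \<in> s))}"

lemma wd_comp:
  assumes sp: "\<sigma> permutes {..<n}" and ss: "s \<subseteq> {..<n}" and es: "even (card s)"
    and tp: "\<tau> permutes {..<n}" and ts: "t \<subseteq> {..<n}" and et: "even (card t)"
  shows "wD_map n \<sigma> s (wD_map n \<tau> t v) = wD_map n (\<sigma> \<circ> \<tau>) (compset n \<tau> t s) v"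
    and "even (card (compset n \<tau> t s))" "compset n \<tau> t s \<subseteq> {..<n}"
proof -
  define s' where "s' = {j. j < n \<and> \<tau> j \<in> s}"
  define P where "P = s' \<inter> t"
  define A where "A = t - s'"
  define B where "B = s' - t"
  have fin: "finite A" "finite B" "finite P" "finite s'"
    using ts unfolding A_def B_def P_def s'_def by (auto intro: finite_subset)
  have u: "compset n \<tau> t s = A \<union> B" using ts unfolding compset_def A_def B_def s'_def by auto
  have t: "t = A \<union> P" unfolding A_def P_def by auto
  have s'e: "s' = B \<union> P" unfolding B_def P_def by auto
  have d: "A \<inter> B = {}" "A \<inter> P = {}" "B \<inter> P = {}" unfolding A_def B_def P_def by auto
  have injs': "inj_on \<tau> s'" using permutes_inj_on[OF tp] unfolding s'_def
    by (meson inj_on_subset lessThan_iff mem_Collect_eq subsetI)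
  have imgs': "\<tau> ` s' = s"
  proof
    show "\<tau> ` s' \<subseteq> s" unfolding s'_def by auto
    show "s \<subseteq> \<tau> ` s'"
    proof
      fix i assume i: "i \<in> s"
      then have "i \<in> {..<n}" using ss by auto
      then obtain j where "j \<in> {..<n}" "\<tau> j = i" using permutes_image[OF tp] by (metis imageE)
      then show "i \<in> \<tau> ` s'" unfolding s'_def using i by auto
    qed
  qed
  have cs': "card s' = card s" using card_image[OF injs'] imgs' by simp
  have cu: "card (compset n \<tau> t s) = card A + card B" using u d fin by (simp add: card_Un_disjoint)
  have ct: "card t = card A + card P" using t d fin by (simp add: card_Un_disjoint)
  have cs: "card s = card B + card P" using s'e d fin cs' by (simp add: card_Un_disjoint)
  obtain p where p: "card A + card P = 2 * p" using et ct by (metis evenE)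
  obtain q where q: "card B + card P = 2 * q" using es cs by (metis evenE)
  have cup: "card A + card B = 2 * (p + q - card P)" using p q by linarith
  show "even (card (compset n \<tau> t s))" using cu cup by simp
  show sub: "compset n \<tau> t s \<subseteq> {..<n}" unfolding compset_def by auto
  have tlt: "\<And>j. j < n \<Longrightarrow> \<tau> j < n" using permutes_in_image[OF tp] by simp
  have stp: "(\<sigma> \<circ> \<tau>) permutes {..<n}" using permutes_compose[OF tp sp] .
  show "wD_map n \<sigma> s (wD_map n \<tau> t v) = wD_map n (\<sigma> \<circ> \<tau>) (compset n \<tau> t s) v"
  proof (rule pic_ext_perm[OF stp])
    let ?h = "wD_map n \<tau> t v"
    have "(\<Sum>i\<in>s. ?h (i+2)) = (\<Sum>j\<in>s'. ?h (\<tau> j + 2))"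
      using sum.reindex[OF injs', of "\<lambda>i. ?h (i+2)"] imgs' by simp
    also have "\<dots> = (\<Sum>j\<in>s'. if j \<in> t then - v 1 - v (j+2) else v (j+2))"
      by (rule sum.cong) (auto simp: wd_cE[OF tp ts] s'_def)
    also have "\<dots> = (\<Sum>j\<in>B. if j \<in> t then - v 1 - v (j+2) else v (j+2))
                   + (\<Sum>j\<in>P. if j \<in> t then - v 1 - v (j+2) else v (j+2))"
      using s'e d fin by (simp add: sum.union_disjoint)
    also have "\<dots> = (\<Sum>j\<in>B. v (j+2)) + (\<Sum>j\<in>P. - v 1 - v (j+2))"
      unfolding B_def P_def by (auto intro!: arg_cong2[where f="(+)"] sum.cong)
    also have "\<dots> = (\<Sum>j\<in>B. v (j+2)) - int (card P) * v 1 - (\<Sum>j\<in>P. v (j+2))"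
      by (simp add: sum_subtractf)
    finally have S: "(\<Sum>i\<in>s. ?h (i+2)) = (\<Sum>j\<in>B. v (j+2)) - int (card P) * v 1 - (\<Sum>j\<in>P. v (j+2))" .
    have St: "(\<Sum>j\<in>t. v (j+2)) = (\<Sum>j\<in>A. v (j+2)) + (\<Sum>j\<in>P. v (j+2))"
      using t d fin by (simp add: sum.union_disjoint)
    have Su: "(\<Sum>j\<in>compset n \<tau> t s. v (j+2)) = (\<Sum>j\<in>A. v (j+2)) + (\<Sum>j\<in>B. v (j+2))"
      using u d fin by (simp add: sum.union_disjoint)
    have dv: "int (card t div 2) + int (card s div 2) - int (card P) = int (card (compset n \<tau> t s) div 2)"
      using ct cs cu p q cup by simp
    have "int (card t div 2) * v 1 + int (card s div 2) * v 1 - int (card P) * v 1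
        = int (card (compset n \<tau> t s) div 2) * v 1"
      using dv by (metis left_diff_distrib distrib_right)
    then show "wD_map n \<sigma> s ?h 0 = wD_map n (\<sigma> \<circ> \<tau>) (compset n \<tau> t s) v 0"
      unfolding wd_c0[OF sp ss] wd_c0[OF stp sub] wd_c0[OF tp ts] wd_c1 S St Su
      by (simp add: algebra_simps)
    show "wD_map n \<sigma> s ?h 1 = wD_map n (\<sigma> \<circ> \<tau>) (compset n \<tau> t s) v 1"
      by (simp only: wd_c1)
    fix j assume j: "j < n"
    show "wD_map n \<sigma> s ?h ((\<sigma> \<circ> \<tau>) j + 2) = wD_map n (\<sigma> \<circ> \<tau>) (compset n \<tau> t s) v ((\<sigma> \<circ> \<tau>) j + 2)"
      using j tlt[OF j] unfolding o_apply wd_cE[OF sp ss tlt[OF j]] wd_cE[OF stp sub j, unfolded o_apply]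
        wd_cE[OF tp ts j] wd_c1
      by (auto simp: compset_def)
  next
    fix k assume "n + 2 \<le> k"
    then show "wD_map n \<sigma> s (wD_map n \<tau> t v) k = wD_map n (\<sigma> \<circ> \<tau>) (compset n \<tau> t s) v k"
      by (simp add: wd_cout[OF sp ss] wd_cout[OF stp sub])
  qed
qed

lemma WD_mem: "g \<in> WD n \<longleftrightarrow> (\<exists>\<sigma> s. g = wD_map n \<sigma> s \<and> \<sigma> permutes {..<n} \<and> s \<subseteq> {..<n} \<and> even (card s))"
  by (auto simp: WD_def)

lemma WDgrp_simps [simp]: "carrier (WDgrp n) = WD n" "monoid.mult (WDgrp n) = (\<circ>)" "one (WDgrp n) = wD_map n id {}"
  by (auto simp: WDgrp_def)

lemma wd_lin: "wD_map n \<sigma> s (\<lambda>k. a * x k + b * y k) = (\<lambda>k. a * wD_map n \<sigma> s x k + b * wD_map n \<sigma> s y k)"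
  unfolding wD_map_def by (auto simp: algebra_simps sum.distrib sum_distrib_left)

lemma wd_sum: "wD_map n \<sigma> s (\<lambda>k. \<Sum>c\<in>C. F c k) = (\<lambda>k. \<Sum>c\<in>C. wD_map n \<sigma> s (F c) k)"
proof -
  have "\<And>k. (\<Sum>j<n. (\<Sum>c\<in>C. F c (j + 2)) * imgE \<sigma> s j k) = (\<Sum>c\<in>C. \<Sum>j<n. F c (j + 2) * imgE \<sigma> s j k)"
    by (simp add: sum_distrib_right sum.swap[where A="{..<n}"])
  then show ?thesis unfolding wD_map_def by (simp add: sum.distrib sum_distrib_right)
qed

lemma wd_picL: "\<sigma> permutes {..<n} \<Longrightarrow> s \<subseteq> {..<n} \<Longrightarrow> wD_map n \<sigma> s v \<in> picL n"
  by (auto simp: picL_def wd_cout)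

lemma wd_id: assumes "v \<in> picL n" shows "wD_map n id {} v = v"
proof (rule pic_ext_perm[OF permutes_id])
  show "wD_map n id {} v 0 = v 0" by (simp add: wd_c0)
  show "wD_map n id {} v 1 = v 1" by (simp only: wd_c1)
  fix j assume "j < n"
  then show "wD_map n id {} v (id j + 2) = v (id j + 2)" using wd_cE[OF permutes_id empty_subsetI \<open>j < n\<close>, of v] by simp
next
  fix k assume "n + 2 \<le> k"
  then show "wD_map n id {} v k = v k" using assms wd_cout[OF permutes_id, of "{}"] by (simp add: picL_def)
qed

lemma WD_comp_closed:
  assumes "g \<in> WD n" "h \<in> WD n" shows "g \<circ> h \<in> WD n"
proof -
  obtain \<sigma> s where g: "g = wD_map n \<sigma> s" "\<sigma> permutes {..<n}" "s \<subseteq> {..<n}" "even (card s)"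
    using assms(1) by (auto simp: WD_mem)
  obtain \<tau> t where h: "h = wD_map n \<tau> t" "\<tau> permutes {..<n}" "t \<subseteq> {..<n}" "even (card t)"
    using assms(2) by (auto simp: WD_mem)
  have "g \<circ> h = wD_map n (\<sigma> \<circ> \<tau>) (compset n \<tau> t s)"
    using wd_comp(1)[OF g(2-4) h(2-4)] g(1) h(1) by auto
  then show ?thesis unfolding WD_mem using wd_comp(2,3)[OF g(2-4) h(2-4)] permutes_compose[OF h(2) g(2)] by blast
qed

lemma group_WD: "group (WDgrp n)"
proof (rule groupI)
  show "\<one>\<^bsub>WDgrp n\<^esub> \<in> carrier (WDgrp n)" by (auto simp: WD_mem intro!: exI[of _ id] permutes_id)
next
  fix x y assume "x \<in> carrier (WDgrp n)" "y \<in> carrier (WDgrp n)"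
  then show "x \<otimes>\<^bsub>WDgrp n\<^esub> y \<in> carrier (WDgrp n)" using WD_comp_closed by simp
next
  fix x y z show "x \<otimes>\<^bsub>WDgrp n\<^esub> y \<otimes>\<^bsub>WDgrp n\<^esub> z = x \<otimes>\<^bsub>WDgrp n\<^esub> (y \<otimes>\<^bsub>WDgrp n\<^esub> z)" by (simp add: o_assoc)
next
  fix x assume "x \<in> carrier (WDgrp n)"
  then obtain \<tau> t where h: "x = wD_map n \<tau> t" "\<tau> permutes {..<n}" "t \<subseteq> {..<n}" "even (card t)"
    by (auto simp: WD_mem)
  have c: "compset n \<tau> t {} = t" using h(3) by (auto simp: compset_def)
  show "\<one>\<^bsub>WDgrp n\<^esub> \<otimes>\<^bsub>WDgrp n\<^esub> x = x"
    unfolding h(1) WDgrp_simps using wd_comp(1)[OF permutes_id _ _ h(2-4), of "{}"] c by (simp add: fun_eq_iff)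
next
  fix x assume "x \<in> carrier (WDgrp n)"
  then obtain \<sigma> s where g: "x = wD_map n \<sigma> s" "\<sigma> permutes {..<n}" "s \<subseteq> {..<n}" "even (card s)"
    by (auto simp: WD_mem)
  have ip: "inv_into UNIV \<sigma> permutes {..<n}" using permutes_inv[OF g(2)] .
  have inj: "inj_on \<sigma> {..<n}" using permutes_inj_on[OF g(2)] .
  have ss: "\<sigma> ` s \<subseteq> {..<n}" using g(2,3) permutes_in_image[OF g(2)] by auto
  have cs: "card (\<sigma> ` s) = card s" using card_image inj_on_subset[OF inj g(3)] by blast
  have c: "compset n \<sigma> s (\<sigma> ` s) = {}"
    using g(3) inj by (auto simp: compset_def inj_on_image_mem_iff)
  have io: "inv_into UNIV \<sigma> \<circ> \<sigma> = id" using permutes_inv_o(2)[OF g(2)] .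
  have "wD_map n (inv_into UNIV \<sigma>) (\<sigma> ` s) \<circ> x = wD_map n id {}"
    unfolding g(1) using wd_comp(1)[OF ip ss _ g(2-4)] g(4) cs c io by (simp add: fun_eq_iff)
  moreover have "wD_map n (inv_into UNIV \<sigma>) (\<sigma> ` s) \<in> WD n" unfolding WD_mem using ip ss cs g(4) by metis
  ultimately show "\<exists>y\<in>carrier (WDgrp n). y \<otimes>\<^bsub>WDgrp n\<^esub> x = \<one>\<^bsub>WDgrp n\<^esub>" by auto
qed

lemma sum_if_sub: fixes n :: nat shows "s \<subseteq> {..<n} \<Longrightarrow> (\<Sum>j<n. if j \<in> s then a j else 0) = (\<Sum>j\<in>s. a j)"
proof -
  assume "s \<subseteq> {..<n}"
  then have "{..<n} \<inter> s = s" by blast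
  moreover have "sum a ({..<n} \<inter> s) = (\<Sum>j<n. if j \<in> s then a j else 0)"
    by (rule sum.inter_restrict) simp
  ultimately show ?thesis by simp
qed

lemma sum_reindex_perm:
  assumes "\<sigma> permutes {..<n}" shows "(\<Sum>k<n. F k) = (\<Sum>j<n. F (\<sigma> j))"
proof -
  have "sum F (\<sigma> ` {..<n}) = (\<Sum>j<n. F (\<sigma> j))" using sum.reindex[OF permutes_inj_on[OF assms], of F] by simp
  then show ?thesis using permutes_image[OF assms] by simp
qed

definition phiQ :: "nat \<Rightarrow> pic \<Rightarrow> (nat \<Rightarrow> int)" where
  "phiQ n v = (\<lambda>i. if i = 0 then 2 * v 0 + (\<Sum>j<n. v (j+2)) else if i = 1 then v 1
     else if i < 2*n+2 then (if even i then v 1 + v ((i - 2) div 2 + 2) else - v ((i - 2) div 2 + 2)) else 0)"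

definition psiQ :: "nat \<Rightarrow> (nat \<Rightarrow> int) \<Rightarrow> pic" where
  "psiQ n y = (\<lambda>k. if k = 0 then y 0 + (\<Sum>j<n. y (2*j+3)) else if k = 1 then 2 * y 1
     else if k < n+2 then - y 1 + y (2*(k-2)+2) - y (2*(k-2)+3) else 0)"

lemma phi_lin: "phiQ n (\<lambda>k. a * x k + b * y k) = (\<lambda>i. a * phiQ n x i + b * phiQ n y i)"
  unfolding phiQ_def by (simp add: fun_eq_iff algebra_simps sum.distrib sum_distrib_left)

lemma psi_lin: "psiQ n (\<lambda>k. a * x k + b * y k) = (\<lambda>i. a * psiQ n x i + b * psiQ n y i)"
  unfolding psiQ_def by (simp add: fun_eq_iff algebra_simps sum.distrib sum_distrib_left)

lemma psi_picL: "psiQ n y \<in> picL n"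
  unfolding psiQ_def picL_def by auto

lemma phi_even: "j < n \<Longrightarrow> phiQ n v (2*j+2) = v 1 + v (j+2)"
  unfolding phiQ_def by auto

lemma phi_odd: "j < n \<Longrightarrow> phiQ n v (2*j+3) = - v (j+2)"
  unfolding phiQ_def by auto

lemma phi_0: "phiQ n v 0 = 2 * v 0 + (\<Sum>j<n. v (j+2))"
  unfolding phiQ_def by simp

lemma phi_1: "phiQ n v 1 = v 1"
  unfolding phiQ_def by simp

lemma phi_out: "2*n+2 \<le> i \<Longrightarrow> phiQ n v i = 0"
  unfolding phiQ_def by simp

lemma psi_0: "psiQ n y 0 = y 0 + (\<Sum>j<n. y (2*j+3))"
  unfolding psiQ_def by simp

lemma psi_1: "psiQ n y 1 = 2 * y 1"
  unfolding psiQ_def by simp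

lemma psi_out: "n+2 \<le> k \<Longrightarrow> psiQ n y k = 0"
  unfolding psiQ_def by simp

lemma psi_E: "j < n \<Longrightarrow> psiQ n y (j+2) = - y 1 + y (2*j+2) - y (2*j+3)"
  unfolding psiQ_def by auto

lemma psi_phi:
  assumes "v \<in> picL n" shows "psiQ n (phiQ n v) = (\<lambda>k. 2 * v k)"
proof
  fix k
  show "psiQ n (phiQ n v) k = 2 * v k"
  proof (cases "k = 0")
    case True
    have "(\<Sum>j<n. phiQ n v (2*j+3)) = (\<Sum>j<n. - v (j+2))" by (rule sum.cong) (auto simp: phi_odd)
    then show ?thesis using True by (simp add: psi_0 phi_0 sum_negf)
  next
    case False
    show ?thesis
    proof (cases "k = 1")
      case True then show ?thesis by (simp only: True psi_1 phi_1)
    next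
      case F1: False
      show ?thesis
      proof (cases "k < n + 2")
        case True
        define j where "j = k - 2"
        have j: "k = j + 2" "j < n" using False F1 True unfolding j_def by arith+
        have "psiQ n (phiQ n v) (j+2) = - phiQ n v 1 + phiQ n v (2*j+2) - phiQ n v (2*j+3)"
          by (rule psi_E[OF j(2)])
        also have "\<dots> = 2 * v (j+2)" unfolding phi_1 phi_even[OF j(2)] phi_odd[OF j(2)] by simp
        finally show ?thesis using j(1) by simp
      next
        case False
        then show ?thesis using assms psi_out[of n k] unfolding picL_def by auto
      qed
    qed
  qed
qed

lemma phi_equiv:
  assumes sp: "\<sigma> permutes {..<n}" and ss: "s \<subseteq> {..<n}" and es: "even (card s)"
  shows "phiQ n (wD_map n \<sigma> s v) 0 = phiQ n v 0"
    and "phiQ n (wD_map n \<sigma> s v) 1 = phiQ n v 1"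
    and "j < n \<Longrightarrow> phiQ n (wD_map n \<sigma> s v) (2*\<sigma> j+2) = phiQ n v (if j \<in> s then 2*j+3 else 2*j+2)"
    and "j < n \<Longrightarrow> phiQ n (wD_map n \<sigma> s v) (2*\<sigma> j+3) = phiQ n v (if j \<in> s then 2*j+2 else 2*j+3)"
proof -
  let ?g = "wD_map n \<sigma> s v"
  have "(\<Sum>k<n. ?g (k+2)) = (\<Sum>j<n. ?g (\<sigma> j+2))" by (rule sum_reindex_perm[OF sp])
  also have "\<dots> = (\<Sum>j<n. v (j+2) + (if j \<in> s then - v 1 - 2 * v (j+2) else 0))"
    by (rule sum.cong) (auto simp: wd_cE[OF sp ss])
  also have "\<dots> = (\<Sum>j<n. v (j+2)) + (\<Sum>j\<in>s. - v 1 - 2 * v (j+2))"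
    by (simp add: sum.distrib sum_if_sub[OF ss])
  also have "\<dots> = (\<Sum>j<n. v (j+2)) - int (card s) * v 1 - 2 * (\<Sum>j\<in>s. v (j+2))"
    by (simp add: sum_subtractf sum_distrib_left)
  finally have S: "(\<Sum>k<n. ?g (k+2)) = (\<Sum>j<n. v (j+2)) - int (card s) * v 1 - 2 * (\<Sum>j\<in>s. v (j+2))" .
  have c2: "2 * int (card s div 2) = int (card s)" using es by auto
  have "2 * (int (card s div 2) * v 1) = int (card s) * v 1" using c2 by (metis mult.assoc)
  then show "phiQ n ?g 0 = phiQ n v 0"
    unfolding phi_0 S wd_c0[OF sp ss] by (simp add: algebra_simps)
  show "phiQ n ?g 1 = phiQ n v 1" by (simp only: phi_1 wd_c1)
  assume j: "j < n"
  have sj: "\<sigma> j < n" using permutes_in_image[OF sp] j by simp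
  show "phiQ n ?g (2*\<sigma> j+2) = phiQ n v (if j \<in> s then 2*j+3 else 2*j+2)"
    using phi_even[OF sj, of ?g] phi_even[OF j] phi_odd[OF j] wd_cE[OF sp ss j] wd_c1[of n \<sigma> s v]
    by (auto simp: phi_1)
  show "phiQ n ?g (2*\<sigma> j+3) = phiQ n v (if j \<in> s then 2*j+2 else 2*j+3)"
    using phi_odd[OF sj, of ?g] phi_even[OF j] phi_odd[OF j] wd_cE[OF sp ss j] wd_c1[of n \<sigma> s v]
    by (auto simp: phi_1)
qed

lemma psi_equiv:
  assumes sp: "\<sigma> permutes {..<n}" and ss: "s \<subseteq> {..<n}" and es: "even (card s)"
    and y0: "y' 0 = y 0" and y1: "y' 1 = y 1"
    and yE: "\<And>j. j < n \<Longrightarrow> y' (2*\<sigma> j+2) = y (if j \<in> s then 2*j+3 else 2*j+2)"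
    and yO: "\<And>j. j < n \<Longrightarrow> y' (2*\<sigma> j+3) = y (if j \<in> s then 2*j+2 else 2*j+3)"
  shows "psiQ n y' = wD_map n \<sigma> s (psiQ n y)"
proof (rule pic_ext_perm[OF sp])
  have "(\<Sum>k<n. y' (2*k+3)) = (\<Sum>j<n. y' (2*\<sigma> j+3))" by (rule sum_reindex_perm[OF sp])
  also have "\<dots> = (\<Sum>j<n. y (2*j+3) + (if j \<in> s then y (2*j+2) - y (2*j+3) else 0))"
    by (rule sum.cong) (auto simp: yO)
  also have "\<dots> = (\<Sum>j<n. y (2*j+3)) + (\<Sum>j\<in>s. y (2*j+2) - y (2*j+3))"
    by (simp add: sum.distrib sum_if_sub[OF ss])
  finally have S1: "(\<Sum>k<n. y' (2*k+3)) = (\<Sum>j<n. y (2*j+3)) + (\<Sum>j\<in>s. y (2*j+2) - y (2*j+3))" .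
  have "(\<Sum>j\<in>s. psiQ n y (j+2)) = (\<Sum>j\<in>s. - y 1 + (y (2*j+2) - y (2*j+3)))"
    by (rule sum.cong) (use ss in \<open>auto simp: psi_E\<close>)
  also have "\<dots> = (\<Sum>j\<in>s. - y 1) + (\<Sum>j\<in>s. y (2*j+2) - y (2*j+3))"
    by (rule sum.distrib)
  also have "\<dots> = - int (card s) * y 1 + (\<Sum>j\<in>s. y (2*j+2) - y (2*j+3))"
    by simp
  finally have S2: "(\<Sum>j\<in>s. psiQ n y (j+2)) = - int (card s) * y 1 + (\<Sum>j\<in>s. y (2*j+2) - y (2*j+3))" .
  have c2: "int (card s div 2) * (2 * y 1) = int (card s) * y 1" using es
    by (metis (no_types, lifting) dvd_mult_div_cancel even_two_times_div_two mult.assoc mult.commute of_nat_mult of_nat_numeral)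
  show "psiQ n y' 0 = wD_map n \<sigma> s (psiQ n y) 0"
    unfolding wd_c0[OF sp ss] psi_0 psi_1 S1 S2 y0 c2 by simp
  show "psiQ n y' 1 = wD_map n \<sigma> s (psiQ n y) 1"
    by (simp only: wd_c1 psi_1 y1)
  fix j assume j: "j < n"
  have sj: "\<sigma> j < n" using permutes_in_image[OF sp] j by simp
  show "psiQ n y' (\<sigma> j + 2) = wD_map n \<sigma> s (psiQ n y) (\<sigma> j + 2)"
    unfolding wd_cE[OF sp ss j] psi_E[OF sj] psi_E[OF j] psi_1 yE[OF j] yO[OF j] y1 by auto
next
  fix k assume "n + 2 \<le> k"
  then show "psiQ n y' k = wD_map n \<sigma> s (psiQ n y) k" by (simp add: psi_out wd_cout[OF sp ss])
qed

lemma (in group) subgroup_lmult_bij: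
  assumes "subgroup H G" "h \<in> H" shows "bij_betw (\<lambda>g. h \<otimes> g) H H"
proof -
  have sub: "H \<subseteq> carrier G" using subgroup.subset[OF assms(1)] .
  have hc: "h \<in> carrier G" using sub assms(2) by auto
  show ?thesis unfolding bij_betw_def
  proof
    show "inj_on (\<lambda>g. h \<otimes> g) H"
    proof (rule inj_onI)
      fix x y assume "x \<in> H" "y \<in> H" "h \<otimes> x = h \<otimes> y"
      then show "x = y" using sub hc by (metis Units_eq Units_l_cancel subsetD)
    qed
    show "(\<lambda>g. h \<otimes> g) ` H = H"
    proof
      show "(\<lambda>g. h \<otimes> g) ` H \<subseteq> H" using subgroup.m_closed[OF assms(1) assms(2)] by auto
      show "H \<subseteq> (\<lambda>g. h \<otimes> g) ` H"
      proof
        fix g assume g: "g \<in> H"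
        have "inv h \<otimes> g \<in> H" using subgroup.m_closed[OF assms(1) subgroup.m_inv_closed[OF assms] g] .
        moreover have "g = h \<otimes> (inv h \<otimes> g)" using sub g hc by (metis inv_solve_left inv_closed m_closed subsetD)
        ultimately show "g \<in> (\<lambda>g. h \<otimes> g) ` H" by blast
      qed
    qed
  qed
qed

lemma finite_WD: "finite (WD n)"
proof -
  have "WD n \<subseteq> (\<lambda>(\<sigma>, s). wD_map n \<sigma> s) ` ({\<sigma>. \<sigma> permutes {..<n}} \<times> Pow {..<n})"
    by (auto simp: WD_def)
  moreover have "finite ({\<sigma>. \<sigma> permutes {..<n}} \<times> Pow {..<n})"
    using finite_permutations[of "{..<n}"] by simp
  ultimately show ?thesis using finite_subset by blast
qed

lemma WD_picL: "g \<in> WD n \<Longrightarrow> g v \<in> picL n"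
  by (auto simp: WD_mem wd_picL)

lemma WD_lin: "g \<in> WD n \<Longrightarrow> g (\<lambda>k. a * x k + b * y k) = (\<lambda>k. a * g x k + b * g y k)"
  by (auto simp: WD_mem wd_lin)

lemma WD_sum: "g \<in> WD n \<Longrightarrow> g (\<lambda>k. \<Sum>c\<in>C. F c k) = (\<lambda>k. \<Sum>c\<in>C. g (F c) k)"
  by (auto simp: WD_mem wd_sum)

lemma WD_neg: "g \<in> WD n \<Longrightarrow> g (\<lambda>k. - x k) = (\<lambda>k. - g x k)"
  using WD_lin[of g n "-1" x 0 x] by simp

lemma WD_diff: "g \<in> WD n \<Longrightarrow> g (\<lambda>k. x k - y k) = (\<lambda>k. g x k - g y k)"
  using WD_lin[of g n 1 x "-1" y] by simp

lemma WD_add: "g \<in> WD n \<Longrightarrow> g (\<lambda>k. x k + y k) = (\<lambda>k. g x k + g y k)"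
  using WD_lin[of g n 1 x 1 y] by simp

lemma WD_smult: "g \<in> WD n \<Longrightarrow> g (\<lambda>k. a * x k) = (\<lambda>k. a * g x k)"
  using WD_lin[of g n a x 0 x] by simp

lemma two_cob:
  assumes H: "subgroup H (WDgrp n)" and fL: "\<forall>g\<in>H. f g \<in> picL n"
    and fc: "\<forall>g\<in>H. \<forall>h\<in>H. f (g \<circ> h) = (\<lambda>k. f g k + g (f h) k)"
  shows "\<exists>M\<in>picL n. \<forall>h\<in>H. (\<lambda>k. 2 * f h k) = (\<lambda>k. h M k - M k)"
proof -
  interpret W: group "WDgrp n" by (rule group_WD)
  have HW: "H \<subseteq> WD n" using subgroup.subset[OF H] by simp
  have finH: "finite H" using finite_subset[OF HW finite_WD] .
  define N where "N = card H"
  have Npos: "N > 0" unfolding N_def using finH subgroup.one_closed[OF H] card_gt_0_iff by blast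
  define w where "w = (\<lambda>k. - (\<Sum>g\<in>H. f g k))"
  have tr: "h w = (\<lambda>k. w k + int N * f h k)" if h: "h \<in> H" for h
  proof -
    have hW: "h \<in> WD n" using h HW by auto
    have bij: "bij_betw (\<lambda>g. h \<circ> g) H H" using W.subgroup_lmult_bij[OF H h] by simp
    have "\<And>k. (\<Sum>g\<in>H. h (f g) k) = (\<Sum>g\<in>H. f (h \<circ> g) k - f h k)"
      by (rule sum.cong) (use fc h in auto)
    also have "\<And>k. (\<Sum>g\<in>H. f (h \<circ> g) k - f h k) = (\<Sum>g\<in>H. f (h \<circ> g) k) - int N * f h k"
      by (simp add: sum_subtractf N_def)
    also have "\<And>k. (\<Sum>g\<in>H. f (h \<circ> g) k) = (\<Sum>g\<in>H. f g k)"
      using sum.reindex_bij_betw[OF bij, of "\<lambda>g. f g k" for k] by simp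
    finally have "\<And>k. (\<Sum>g\<in>H. h (f g) k) = (\<Sum>g\<in>H. f g k) - int N * f h k" .
    moreover have "h (\<lambda>k. \<Sum>g\<in>H. f g k) = (\<lambda>k. \<Sum>g\<in>H. h (f g) k)" by (rule WD_sum[OF hW])
    ultimately show ?thesis unfolding w_def using WD_neg[OF hW] by simp
  qed
  define \<Phi> where "\<Phi> = phiQ n w"
  define m where "m = (\<lambda>i. \<Phi> i div int N)"
  define M where "M = psiQ n m"
  have dv: "\<Phi> i' div int N = \<Phi> i div int N + c" if "\<Phi> i' = \<Phi> i + int N * c" for i i' c
    using that Npos by simp
  have "\<forall>h\<in>H. (\<lambda>k. 2 * f h k) = (\<lambda>k. h M k - M k)"
  proof
    fix h assume h: "h \<in> H"
    then have "h \<in> WD n" using HW by auto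
    then obtain \<sigma> s where g: "h = wD_map n \<sigma> s" "\<sigma> permutes {..<n}" "s \<subseteq> {..<n}" "even (card s)"
      unfolding WD_mem by blast
    have pw: "phiQ n (h w) = (\<lambda>i. \<Phi> i + int N * phiQ n (f h) i)"
      unfolding tr[OF h] \<Phi>_def using phi_lin[of n 1 w "int N" "f h"] by simp
    let ?c = "phiQ n (f h)"
    define y' where "y' = (\<lambda>i. m i + ?c i)"
    have a0: "phiQ n (h w) 0 = \<Phi> 0"
      using phi_equiv(1)[OF g(2-4), of w] unfolding g(1)[symmetric] \<Phi>_def .
    have b0: "phiQ n (h w) 0 = \<Phi> 0 + int N * ?c 0" using pw by simp
    have c0: "?c 0 = 0" using a0 b0 Npos by simp
    have a1: "phiQ n (h w) 1 = \<Phi> 1"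
      using phi_equiv(2)[OF g(2-4), of w] unfolding g(1)[symmetric] \<Phi>_def .
    have b1: "phiQ n (h w) 1 = \<Phi> 1 + int N * ?c 1" using pw by simp
    have c1: "?c 1 = 0" using a1 b1 Npos by simp
    have "psiQ n y' = wD_map n \<sigma> s (psiQ n m)"
    proof (rule psi_equiv[OF g(2-4)])
      show "y' 0 = m 0" "y' 1 = m 1" unfolding y'_def using c0 c1 by simp_all
      fix j assume j: "j < n"
      let ?i1 = "if j \<in> s then 2 * j + 3 else 2 * j + 2"
      let ?i2 = "if j \<in> s then 2 * j + 2 else 2 * j + 3"
      have a1: "phiQ n (h w) (2 * \<sigma> j + 2) = \<Phi> ?i1"
        using phi_equiv(3)[OF g(2-4) j, of w] unfolding g(1)[symmetric] \<Phi>_def .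
      have b1: "phiQ n (h w) (2 * \<sigma> j + 2) = \<Phi> (2 * \<sigma> j + 2) + int N * ?c (2 * \<sigma> j + 2)"
        using pw by simp
      have a2: "phiQ n (h w) (2 * \<sigma> j + 3) = \<Phi> ?i2"
        using phi_equiv(4)[OF g(2-4) j, of w] unfolding g(1)[symmetric] \<Phi>_def .
      have b2: "phiQ n (h w) (2 * \<sigma> j + 3) = \<Phi> (2 * \<sigma> j + 3) + int N * ?c (2 * \<sigma> j + 3)"
        using pw by simp
      have e1: "\<Phi> ?i1 = \<Phi> (2 * \<sigma> j + 2) + int N * ?c (2 * \<sigma> j + 2)" using a1 b1 by simp
      have e2: "\<Phi> ?i2 = \<Phi> (2 * \<sigma> j + 3) + int N * ?c (2 * \<sigma> j + 3)" using a2 b2 by simp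
      show "y' (2 * \<sigma> j + 2) = m ?i1"
        unfolding y'_def m_def dv[OF e1] by simp
      show "y' (2 * \<sigma> j + 3) = m ?i2"
        unfolding y'_def m_def dv[OF e2] by simp
    qed
    moreover have "psiQ n y' = (\<lambda>k. M k + 2 * f h k)"
    proof -
      have "psiQ n y' = (\<lambda>k. 1 * psiQ n m k + 1 * psiQ n ?c k)"
        unfolding y'_def using psi_lin[of n 1 m 1 ?c] by simp
      also have "psiQ n ?c = (\<lambda>k. 2 * f h k)" using psi_phi[of "f h" n] fL h by blast
      finally show ?thesis unfolding M_def by simp
    qed
    ultimately have "wD_map n \<sigma> s M = (\<lambda>k. M k + 2 * f h k)" unfolding M_def by simp
    then show "(\<lambda>k. 2 * f h k) = (\<lambda>k. h M k - M k)"
      unfolding g(1) by simp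
  qed
  then show ?thesis using psi_picL M_def by blast
qed



lemma coset_action:
  assumes H: "subgroup H (WDgrp n)" and G: "subgroup G (WDgrp n)" and HG: "H \<subseteq> G"
    and G2: "subgroup G2 (WDgrp n)"
  defines "X \<equiv> {x <#\<^bsub>WDgrp n\<^esub> G2 | x. x \<in> G}"
  shows "group_action (WDgrp n\<lparr>carrier := H\<rparr>) X (\<lambda>h. \<lambda>c\<in>X. h <#\<^bsub>WDgrp n\<^esub> c)"
proof -
  interpret W: group "WDgrp n" by (rule group_WD)
  have G2c: "G2 \<subseteq> carrier (WDgrp n)" using subgroup.subset[OF G2] .
  have Gc: "G \<subseteq> carrier (WDgrp n)" using subgroup.subset[OF G] .
  have img: "h <#\<^bsub>WDgrp n\<^esub> c \<in> X" if hG: "h \<in> G" and cX: "c \<in> X" for h c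
  proof -
    obtain x where x: "x \<in> G" "c = x <#\<^bsub>WDgrp n\<^esub> G2" using cX unfolding X_def by blast
    have "h <#\<^bsub>WDgrp n\<^esub> c = (h \<otimes>\<^bsub>WDgrp n\<^esub> x) <#\<^bsub>WDgrp n\<^esub> G2"
      using W.lcos_m_assoc[OF G2c] x hG Gc by auto
    moreover have "h \<otimes>\<^bsub>WDgrp n\<^esub> x \<in> G" using subgroup.m_closed[OF G hG x(1)] .
    ultimately show ?thesis unfolding X_def by blast
  qed
  have assoc: "a <#\<^bsub>WDgrp n\<^esub> (b <#\<^bsub>WDgrp n\<^esub> c) = (a \<otimes>\<^bsub>WDgrp n\<^esub> b) <#\<^bsub>WDgrp n\<^esub> c"
    if "a \<in> G" "b \<in> G" "c \<in> X" for a b c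
  proof -
    have "c \<subseteq> carrier (WDgrp n)" using that(3) G2c Gc W.l_coset_subset_G unfolding X_def by blast
    moreover have "a \<in> carrier (WDgrp n)" "b \<in> carrier (WDgrp n)" using that Gc by auto
    ultimately show ?thesis by (rule W.lcos_m_assoc)
  qed
  have one: "\<one>\<^bsub>WDgrp n\<^esub> <#\<^bsub>WDgrp n\<^esub> c = c" if "c \<in> X" for c
  proof -
    have "c \<subseteq> carrier (WDgrp n)" using that G2c Gc W.l_coset_subset_G unfolding X_def by blast
    then show ?thesis by (rule W.lcos_mult_one)
  qed
  have HH: "group (WDgrp n\<lparr>carrier := H\<rparr>)" using W.subgroup_imp_group[OF H] .
  have bij: "(\<lambda>c\<in>X. h <#\<^bsub>WDgrp n\<^esub> c) \<in> Bij X" if h: "h \<in> H" for h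
  proof -
    have hG: "h \<in> G" using h HG by auto
    have ihG: "inv\<^bsub>WDgrp n\<^esub> h \<in> G" using subgroup.m_inv_closed[OF G hG] .
    have hc: "h \<in> carrier (WDgrp n)" using hG Gc by auto
    have "bij_betw (\<lambda>c. h <#\<^bsub>WDgrp n\<^esub> c) X X"
    proof (rule bij_betw_byWitness[where f'="\<lambda>c. inv\<^bsub>WDgrp n\<^esub> h <#\<^bsub>WDgrp n\<^esub> c"])
      show "\<forall>c\<in>X. inv\<^bsub>WDgrp n\<^esub> h <#\<^bsub>WDgrp n\<^esub> (h <#\<^bsub>WDgrp n\<^esub> c) = c"
        using assoc[OF ihG hG] one W.l_inv[OF hc] by simp
      show "\<forall>c\<in>X. h <#\<^bsub>WDgrp n\<^esub> (inv\<^bsub>WDgrp n\<^esub> h <#\<^bsub>WDgrp n\<^esub> c) = c"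
        using assoc[OF hG ihG] one W.r_inv[OF hc] by simp
      show "(\<lambda>c. h <#\<^bsub>WDgrp n\<^esub> c) ` X \<subseteq> X" using img[OF hG] by auto
      show "(\<lambda>c. inv\<^bsub>WDgrp n\<^esub> h <#\<^bsub>WDgrp n\<^esub> c) ` X \<subseteq> X" using img[OF ihG] by auto
    qed
    then show ?thesis unfolding Bij_def by (auto simp: bij_betw_def inj_on_def)
  qed
  have hom: "(\<lambda>h. \<lambda>c\<in>X. h <#\<^bsub>WDgrp n\<^esub> c) \<in> hom (WDgrp n\<lparr>carrier := H\<rparr>) (BijGroup X)"
  proof (rule homI)
    fix h assume "h \<in> carrier (WDgrp n\<lparr>carrier := H\<rparr>)"
    then show "(\<lambda>c\<in>X. h <#\<^bsub>WDgrp n\<^esub> c) \<in> carrier (BijGroup X)" using bij by (simp add: BijGroup_def)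
  next
    fix a b assume ab: "a \<in> carrier (WDgrp n\<lparr>carrier := H\<rparr>)" "b \<in> carrier (WDgrp n\<lparr>carrier := H\<rparr>)"
    then have abH: "a \<in> H" "b \<in> H" by auto
    have "(\<lambda>c\<in>X. (a \<otimes>\<^bsub>WDgrp n\<^esub> b) <#\<^bsub>WDgrp n\<^esub> c) = compose X (\<lambda>c\<in>X. a <#\<^bsub>WDgrp n\<^esub> c) (\<lambda>c\<in>X. b <#\<^bsub>WDgrp n\<^esub> c)"
      using assoc abH HG img by (auto simp: compose_def fun_eq_iff subsetD)
    then show "(\<lambda>c\<in>X. (a \<otimes>\<^bsub>WDgrp n\<lparr>carrier := H\<rparr>\<^esub> b) <#\<^bsub>WDgrp n\<^esub> c) =
        (\<lambda>c\<in>X. a <#\<^bsub>WDgrp n\<^esub> c) \<otimes>\<^bsub>BijGroup X\<^esub> (\<lambda>c\<in>X. b <#\<^bsub>WDgrp n\<^esub> c)"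
      using bij abH by (simp add: BijGroup_def)
  qed
  show ?thesis unfolding group_action_def group_hom_def
    using HH group_BijGroup hom by (simp add: group_hom_axioms_def)
qed

declare WDgrp_simps[simp del]

lemma mult_eq: "a \<otimes>\<^bsub>WDgrp n\<^esub> b = a \<circ> b" by (simp add: WDgrp_def)
lemma mult_apply: "(a \<otimes>\<^bsub>WDgrp n\<^esub> b) v = a (b v)" by (simp add: WDgrp_def)
lemma one_apply: "v \<in> picL n \<Longrightarrow> \<one>\<^bsub>WDgrp n\<^esub> v = v" by (simp add: WDgrp_def wd_id)

lemma conj_transport:
  assumes xW: "x \<in> WD n" and HW: "H \<subseteq> WD n" and KW: "K \<subseteq> WD n"
    and KH: "\<And>q. q \<in> K \<Longrightarrow> x \<otimes>\<^bsub>WDgrp n\<^esub> q \<otimes>\<^bsub>WDgrp n\<^esub> inv\<^bsub>WDgrp n\<^esub> x \<in> H"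
    and Kv: "H1_vanishes n K"
    and fL: "\<forall>g\<in>H. f g \<in> picL n"
    and fc: "\<forall>g\<in>H. \<forall>h\<in>H. f (g \<circ> h) = (\<lambda>k. f g k + g (f h) k)"
  shows "\<exists>m0\<in>picL n. \<forall>k\<in>H. inv\<^bsub>WDgrp n\<^esub> x \<otimes>\<^bsub>WDgrp n\<^esub> k \<otimes>\<^bsub>WDgrp n\<^esub> x \<in> K
            \<longrightarrow> f k = (\<lambda>j. k m0 j - m0 j)"
proof -
  interpret W: group "WDgrp n" by (rule group_WD)
  let ?i = "inv\<^bsub>WDgrp n\<^esub> x"
  have xc: "x \<in> carrier (WDgrp n)" using xW by (simp add: WDgrp_simps)
  have ic: "?i \<in> WD n" using W.inv_closed[OF xc] by (simp add: WDgrp_simps)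
  have ic': "?i \<in> carrier (WDgrp n)" using W.inv_closed[OF xc] .
  have c1: "?i \<otimes>\<^bsub>WDgrp n\<^esub> (x \<otimes>\<^bsub>WDgrp n\<^esub> y) = y" if "y \<in> carrier (WDgrp n)" for y
    using that xc ic' by (simp add: W.m_assoc[symmetric] W.l_inv)
  have c2: "x \<otimes>\<^bsub>WDgrp n\<^esub> (?i \<otimes>\<^bsub>WDgrp n\<^esub> y) = y" if "y \<in> carrier (WDgrp n)" for y
    using that xc ic' by (simp add: W.m_assoc[symmetric] W.r_inv)
  have G1: "x \<otimes>\<^bsub>WDgrp n\<^esub> (q1 \<otimes>\<^bsub>WDgrp n\<^esub> q2) \<otimes>\<^bsub>WDgrp n\<^esub> ?i
      = (x \<otimes>\<^bsub>WDgrp n\<^esub> q1 \<otimes>\<^bsub>WDgrp n\<^esub> ?i) \<otimes>\<^bsub>WDgrp n\<^esub> (x \<otimes>\<^bsub>WDgrp n\<^esub> q2 \<otimes>\<^bsub>WDgrp n\<^esub> ?i)"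
    if "q1 \<in> carrier (WDgrp n)" "q2 \<in> carrier (WDgrp n)" for q1 q2
    using that xc ic' by (simp add: W.m_assoc c1 c2)
  have G2: "?i \<otimes>\<^bsub>WDgrp n\<^esub> (x \<otimes>\<^bsub>WDgrp n\<^esub> q1 \<otimes>\<^bsub>WDgrp n\<^esub> ?i) = q1 \<otimes>\<^bsub>WDgrp n\<^esub> ?i"
    if "q1 \<in> carrier (WDgrp n)" for q1
    using that xc ic' by (simp add: W.m_assoc c1 c2)
  have G3: "x \<otimes>\<^bsub>WDgrp n\<^esub> (?i \<otimes>\<^bsub>WDgrp n\<^esub> k \<otimes>\<^bsub>WDgrp n\<^esub> x) \<otimes>\<^bsub>WDgrp n\<^esub> ?i = k"
    if "k \<in> carrier (WDgrp n)" for k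
    using that xc ic' by (simp add: W.m_assoc c1 c2)
  have G4: "x \<otimes>\<^bsub>WDgrp n\<^esub> (?i \<otimes>\<^bsub>WDgrp n\<^esub> k \<otimes>\<^bsub>WDgrp n\<^esub> x) = k \<otimes>\<^bsub>WDgrp n\<^esub> x"
    if "k \<in> carrier (WDgrp n)" for k
    using that xc ic' by (simp add: W.m_assoc c1 c2)
  have G5: "x \<otimes>\<^bsub>WDgrp n\<^esub> ?i = \<one>\<^bsub>WDgrp n\<^esub>" using W.r_inv[OF xc] .
  define f' where "f' q = ?i (f (x \<otimes>\<^bsub>WDgrp n\<^esub> q \<otimes>\<^bsub>WDgrp n\<^esub> ?i))" for q
  have f'L: "\<forall>q\<in>K. f' q \<in> picL n" unfolding f'_def using WD_picL[OF ic] by blast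
  have f'c: "\<forall>q1\<in>K. \<forall>q2\<in>K. f' (q1 \<circ> q2) = (\<lambda>j. f' q1 j + q1 (f' q2) j)"
  proof (intro ballI)
    fix q1 q2 assume q: "q1 \<in> K" "q2 \<in> K"
    have qc: "q1 \<in> carrier (WDgrp n)" "q2 \<in> carrier (WDgrp n)" using q KW by (auto simp: WDgrp_simps)
    let ?k1 = "x \<otimes>\<^bsub>WDgrp n\<^esub> q1 \<otimes>\<^bsub>WDgrp n\<^esub> ?i"
    let ?k2 = "x \<otimes>\<^bsub>WDgrp n\<^esub> q2 \<otimes>\<^bsub>WDgrp n\<^esub> ?i"
    have kH: "?k1 \<in> H" "?k2 \<in> H" using KH q by auto
    have qq: "q1 \<circ> q2 = q1 \<otimes>\<^bsub>WDgrp n\<^esub> q2" by (simp add: mult_eq)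
    have "f' (q1 \<circ> q2) = ?i (f (?k1 \<circ> ?k2))"
      by (simp only: f'_def qq G1[OF qc] mult_eq[where a="?k1" and b="?k2" and n=n])
    also have "\<dots> = ?i (\<lambda>j. f ?k1 j + ?k1 (f ?k2) j)" using fc kH by simp
    also have "\<dots> = (\<lambda>j. ?i (f ?k1) j + ?i (?k1 (f ?k2)) j)" using WD_add[OF ic] by simp
    also have "?i (?k1 (f ?k2)) = q1 (?i (f ?k2))"
      using G2[OF qc(1)] mult_apply by metis
    finally show "f' (q1 \<circ> q2) = (\<lambda>j. f' q1 j + q1 (f' q2) j)" unfolding f'_def .
  qed
  obtain m' where m': "m' \<in> picL n" "\<forall>q\<in>K. f' q = (\<lambda>j. q m' j - m' j)"
    using Kv f'L f'c unfolding H1_vanishes_def by blast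
  have "\<forall>k\<in>H. ?i \<otimes>\<^bsub>WDgrp n\<^esub> k \<otimes>\<^bsub>WDgrp n\<^esub> x \<in> K \<longrightarrow> f k = (\<lambda>j. k (x m') j - x m' j)"
  proof (intro ballI impI)
    fix k assume k: "k \<in> H" and qK: "?i \<otimes>\<^bsub>WDgrp n\<^esub> k \<otimes>\<^bsub>WDgrp n\<^esub> x \<in> K"
    let ?q = "?i \<otimes>\<^bsub>WDgrp n\<^esub> k \<otimes>\<^bsub>WDgrp n\<^esub> x"
    have kc: "k \<in> carrier (WDgrp n)" using k HW by (auto simp: WDgrp_simps)
    have "f' ?q = ?i (f k)" unfolding f'_def G3[OF kc] ..
    then have e: "?i (f k) = (\<lambda>j. ?q m' j - m' j)" using m'(2) qK by simp
    have "f k = x (?i (f k))" using G5 mult_apply one_apply fL k by metis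
    also have "\<dots> = (\<lambda>j. x (?q m') j - x m' j)" unfolding e using WD_diff[OF xW] by simp
    also have "x (?q m') = k (x m')" using G4[OF kc] mult_apply by metis
    finally show "f k = (\<lambda>j. k (x m') j - x m' j)" .
  qed
  moreover have "x m' \<in> picL n" using WD_picL[OF xW] .
  ultimately show ?thesis by blast
qed

lemma H1_from_sylow:
  assumes G: "subgroup G (WDgrp n)" and G2: "subgroup G2 (WDgrp n)" and G2G: "G2 \<subseteq> G"
    and cG2: "card G2 = 2^a" and nd: "\<not> 2 ^ Suc a dvd card G"
    and hyp: "H1_condition n G2"
    and H: "subgroup H (WDgrp n)" and HG: "H \<subseteq> G"
  shows "H1_vanishes n H"
  unfolding H1_vanishes_def
proof (intro allI impI)
  fix f assume "(\<forall>g\<in>H. f g \<in> picL n) \<and> (\<forall>g\<in>H. \<forall>h\<in>H. f (g \<circ> h) = (\<lambda>k. f g k + g (f h) k))"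
  then have fL: "\<forall>g\<in>H. f g \<in> picL n" and fc: "\<forall>g\<in>H. \<forall>h\<in>H. f (g \<circ> h) = (\<lambda>k. f g k + g (f h) k)"
    by auto
  interpret W: group "WDgrp n" by (rule group_WD)
  have Wc: "carrier (WDgrp n) = WD n" by (simp add: WDgrp_simps)
  have GW: "G \<subseteq> WD n" using subgroup.subset[OF G] Wc by simp
  have HW: "H \<subseteq> WD n" using HG GW by auto
  have G2W: "G2 \<subseteq> WD n" using subgroup.subset[OF G2] Wc by simp
  have finG: "finite G" using finite_subset[OF GW finite_WD] .
  define X where "X = {x <#\<^bsub>WDgrp n\<^esub> G2 | x. x \<in> G}"
  define \<phi>a where "\<phi>a = (\<lambda>h. \<lambda>c\<in>X. h <#\<^bsub>WDgrp n\<^esub> c)"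
  let ?GG = "WDgrp n\<lparr>carrier := G\<rparr>"
  let ?HH = "WDgrp n\<lparr>carrier := H\<rparr>"
  have GGg: "group ?GG" by (rule W.subgroup_imp_group[OF G])
  have G2GG: "subgroup G2 ?GG" by (rule W.subgroup_incl[OF G2 G G2G])
  have lc: "lcosets\<^bsub>?GG\<^esub> G2 = X" unfolding LCOSETS_def X_def l_coset_def by auto
  have "card (lcosets\<^bsub>?GG\<^esub> G2) * card G2 = order ?GG"
    using group.l_lagrange[OF GGg _ G2GG] finG by simp
  then have cX: "card X * 2^a = card G" using lc cG2 by (simp add: order_def)
  have oddX: "odd (card X)"
  proof
    assume "even (card X)" then obtain r where "card X = 2*r" by blast
    then have "2 * r * 2^a = card G" using cX by simp
    then have "card G = 2^Suc a * r" by (metis mult.commute mult.assoc power_Suc)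
    then show False using nd by simp
  qed
  have finX: "finite X"
  proof -
    have "X = (\<lambda>x. x <#\<^bsub>WDgrp n\<^esub> G2) ` G" unfolding X_def by auto
    then show ?thesis using finG by simp
  qed
  interpret A: group_action ?HH X \<phi>a
    unfolding \<phi>a_def X_def by (rule coset_action[OF H G HG G2])
  have "(\<Sum>orb\<in>orbits ?HH X \<phi>a. \<Sum>c\<in>orb. (1::nat)) = (\<Sum>c\<in>X. 1)" by (rule A.disjoint_sum[OF finX])
  then have sumc: "(\<Sum>orb\<in>orbits ?HH X \<phi>a. card orb) = card X" by simp
  obtain orb where orb: "orb \<in> orbits ?HH X \<phi>a" "odd (card orb)"
  proof -
    have "\<not> (\<forall>orb\<in>orbits ?HH X \<phi>a. even (card orb))"
    proof
      assume "\<forall>orb\<in>orbits ?HH X \<phi>a. even (card orb)"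
      then have "even (\<Sum>orb\<in>orbits ?HH X \<phi>a. card orb)" by (simp add: dvd_sum)
      then show False using sumc oddX by simp
    qed
    then show ?thesis using that by blast
  qed
  then obtain c0 where c0: "c0 \<in> X" "orb = orbit ?HH \<phi>a c0" unfolding orbits_def by blast
  then obtain x where x: "x \<in> G" "c0 = x <#\<^bsub>WDgrp n\<^esub> G2" unfolding X_def by blast
  have xc: "x \<in> carrier (WDgrp n)" using x GW Wc by auto
  have xW: "x \<in> WD n" using x GW by auto
  have ic: "inv\<^bsub>WDgrp n\<^esub> x \<in> carrier (WDgrp n)" using W.inv_closed[OF xc] .
  have G2c: "G2 \<subseteq> carrier (WDgrp n)" using G2W Wc by simp
  have c1: "inv\<^bsub>WDgrp n\<^esub> x \<otimes>\<^bsub>WDgrp n\<^esub> (x \<otimes>\<^bsub>WDgrp n\<^esub> y) = y" if "y \<in> carrier (WDgrp n)" for y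
    using that xc ic by (simp add: W.m_assoc[symmetric] W.l_inv)
  have c2: "x \<otimes>\<^bsub>WDgrp n\<^esub> (inv\<^bsub>WDgrp n\<^esub> x \<otimes>\<^bsub>WDgrp n\<^esub> y) = y" if "y \<in> carrier (WDgrp n)" for y
    using that xc ic by (simp add: W.m_assoc[symmetric] W.r_inv)
  have c0c: "c0 \<subseteq> carrier (WDgrp n)" using x W.l_coset_subset_G[OF G2c xc] by simp
  have Hc: "H \<subseteq> carrier (WDgrp n)" using HW Wc by simp
  have phiX: "\<phi>a h c = h <#\<^bsub>WDgrp n\<^esub> c" if "c \<in> X" for h c
    using that unfolding \<phi>a_def by simp
  have stabG2: "inv\<^bsub>WDgrp n\<^esub> x \<otimes>\<^bsub>WDgrp n\<^esub> k \<otimes>\<^bsub>WDgrp n\<^esub> x \<in> G2"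
    if k: "k \<in> H" "k <#\<^bsub>WDgrp n\<^esub> c0 = c0" for k
  proof -
    have kc: "k \<in> carrier (WDgrp n)" using k Hc by auto
    have "k <#\<^bsub>WDgrp n\<^esub> c0 = (k \<otimes>\<^bsub>WDgrp n\<^esub> x) <#\<^bsub>WDgrp n\<^esub> G2"
      using W.lcos_m_assoc[OF G2c kc xc] x by simp
    moreover have "k \<otimes>\<^bsub>WDgrp n\<^esub> x \<in> (k \<otimes>\<^bsub>WDgrp n\<^esub> x) <#\<^bsub>WDgrp n\<^esub> G2"
      using W.lcos_self[OF W.m_closed[OF kc xc] G2] .
    ultimately have "k \<otimes>\<^bsub>WDgrp n\<^esub> x \<in> x <#\<^bsub>WDgrp n\<^esub> G2" using k(2) x by simp
    then have "inv\<^bsub>WDgrp n\<^esub> x \<otimes>\<^bsub>WDgrp n\<^esub> (k \<otimes>\<^bsub>WDgrp n\<^esub> x) \<in> G2"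
      using subgroup.lcos_module_imp[OF G2 group_WD xc] by blast
    then show ?thesis using kc xc ic by (simp add: W.m_assoc)
  qed
  define K2 where "K2 = {q \<in> G2. x \<otimes>\<^bsub>WDgrp n\<^esub> q \<otimes>\<^bsub>WDgrp n\<^esub> inv\<^bsub>WDgrp n\<^esub> x \<in> H}"
  have K2sub: "subgroup K2 (WDgrp n)"
  proof (rule W.subgroupI)
    show "K2 \<subseteq> carrier (WDgrp n)" unfolding K2_def using G2c by auto
    have "x \<otimes>\<^bsub>WDgrp n\<^esub> \<one>\<^bsub>WDgrp n\<^esub> \<otimes>\<^bsub>WDgrp n\<^esub> inv\<^bsub>WDgrp n\<^esub> x = \<one>\<^bsub>WDgrp n\<^esub>"
      using xc by simp
    then show "K2 \<noteq> {}" unfolding K2_def using subgroup.one_closed[OF G2] subgroup.one_closed[OF H] by auto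
  next
    fix q assume q: "q \<in> K2"
    then have qc: "q \<in> carrier (WDgrp n)" and qG: "q \<in> G2" and qH: "x \<otimes>\<^bsub>WDgrp n\<^esub> q \<otimes>\<^bsub>WDgrp n\<^esub> inv\<^bsub>WDgrp n\<^esub> x \<in> H"
      unfolding K2_def using G2c by auto
    have "inv\<^bsub>WDgrp n\<^esub> (x \<otimes>\<^bsub>WDgrp n\<^esub> q \<otimes>\<^bsub>WDgrp n\<^esub> inv\<^bsub>WDgrp n\<^esub> x)
        = x \<otimes>\<^bsub>WDgrp n\<^esub> inv\<^bsub>WDgrp n\<^esub> q \<otimes>\<^bsub>WDgrp n\<^esub> inv\<^bsub>WDgrp n\<^esub> x"
      using qc xc ic by (simp add: W.inv_mult_group W.m_assoc)
    then show "inv\<^bsub>WDgrp n\<^esub> q \<in> K2" unfolding K2_def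
      using subgroup.m_inv_closed[OF H qH] subgroup.m_inv_closed[OF G2 qG] by auto
  next
    fix a b assume ab: "a \<in> K2" "b \<in> K2"
    then have abc: "a \<in> carrier (WDgrp n)" "b \<in> carrier (WDgrp n)" unfolding K2_def using G2c by auto
    have "x \<otimes>\<^bsub>WDgrp n\<^esub> (a \<otimes>\<^bsub>WDgrp n\<^esub> b) \<otimes>\<^bsub>WDgrp n\<^esub> inv\<^bsub>WDgrp n\<^esub> x
      = (x \<otimes>\<^bsub>WDgrp n\<^esub> a \<otimes>\<^bsub>WDgrp n\<^esub> inv\<^bsub>WDgrp n\<^esub> x) \<otimes>\<^bsub>WDgrp n\<^esub> (x \<otimes>\<^bsub>WDgrp n\<^esub> b \<otimes>\<^bsub>WDgrp n\<^esub> inv\<^bsub>WDgrp n\<^esub> x)"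
      using abc xc ic by (simp add: W.m_assoc c1)
    then show "a \<otimes>\<^bsub>WDgrp n\<^esub> b \<in> K2" using ab unfolding K2_def
      using subgroup.m_closed[OF H] subgroup.m_closed[OF G2] by auto
  qed
  have K2G2: "K2 \<subseteq> G2" unfolding K2_def by auto
  have K2v: "H1_vanishes n K2" using hyp K2sub K2G2 G2G unfolding H1_condition_def by blast
  have K2W: "K2 \<subseteq> WD n" using G2W K2G2 by auto
  have K2H: "x \<otimes>\<^bsub>WDgrp n\<^esub> q \<otimes>\<^bsub>WDgrp n\<^esub> inv\<^bsub>WDgrp n\<^esub> x \<in> H" if "q \<in> K2" for q
    using that unfolding K2_def by auto
  obtain m0 where m0: "m0 \<in> picL n"
    "\<forall>k\<in>H. inv\<^bsub>WDgrp n\<^esub> x \<otimes>\<^bsub>WDgrp n\<^esub> k \<otimes>\<^bsub>WDgrp n\<^esub> x \<in> K2 \<longrightarrow> f k = (\<lambda>j. k m0 j - m0 j)"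
    using conj_transport[OF xW HW K2W K2H K2v fL fc] by blast
  have stab: "f k = (\<lambda>j. k m0 j - m0 j)" if k: "k \<in> H" "k <#\<^bsub>WDgrp n\<^esub> c0 = c0" for k
  proof -
    have kc: "k \<in> carrier (WDgrp n)" using k Hc by auto
    have "x \<otimes>\<^bsub>WDgrp n\<^esub> (inv\<^bsub>WDgrp n\<^esub> x \<otimes>\<^bsub>WDgrp n\<^esub> k \<otimes>\<^bsub>WDgrp n\<^esub> x) \<otimes>\<^bsub>WDgrp n\<^esub> inv\<^bsub>WDgrp n\<^esub> x = k"
      using kc xc ic by (simp add: W.m_assoc c2)
    then have "inv\<^bsub>WDgrp n\<^esub> x \<otimes>\<^bsub>WDgrp n\<^esub> k \<otimes>\<^bsub>WDgrp n\<^esub> x \<in> K2"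
      unfolding K2_def using stabG2[OF k] k(1) by simp
    then show ?thesis using m0(2) k(1) by blast
  qed
  have phic0: "\<phi>a g c0 = g <#\<^bsub>WDgrp n\<^esub> c0" for g using phiX[OF c0(1)] .
  define Mc where "Mc c = (let g = (SOME g. g \<in> H \<and> \<phi>a g c0 = c) in (\<lambda>j. g m0 j - f g j))" for c
  have Mc_eq: "Mc (\<phi>a g c0) = (\<lambda>j. g m0 j - f g j)" if g: "g \<in> H" for g
  proof -
    define g' where "g' = (SOME g'. g' \<in> H \<and> \<phi>a g' c0 = \<phi>a g c0)"
    have g': "g' \<in> H" "\<phi>a g' c0 = \<phi>a g c0"
      unfolding g'_def using someI[of "\<lambda>g'. g' \<in> H \<and> \<phi>a g' c0 = \<phi>a g c0" g] g by auto
    have gc: "g \<in> carrier (WDgrp n)" "g' \<in> carrier (WDgrp n)" using g g'(1) Hc by auto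
    have igc: "inv\<^bsub>WDgrp n\<^esub> g' \<in> carrier (WDgrp n)" using W.inv_closed[OF gc(2)] .
    define k where "k = inv\<^bsub>WDgrp n\<^esub> g' \<otimes>\<^bsub>WDgrp n\<^esub> g"
    have kH: "k \<in> H" unfolding k_def using subgroup.m_closed[OF H subgroup.m_inv_closed[OF H g'(1)] g] .
    have "k <#\<^bsub>WDgrp n\<^esub> c0 = inv\<^bsub>WDgrp n\<^esub> g' <#\<^bsub>WDgrp n\<^esub> (g <#\<^bsub>WDgrp n\<^esub> c0)"
      unfolding k_def using W.lcos_m_assoc[OF c0c igc gc(1)] by simp
    also have "g <#\<^bsub>WDgrp n\<^esub> c0 = g' <#\<^bsub>WDgrp n\<^esub> c0" using g'(2) phic0 by simp
    also have "inv\<^bsub>WDgrp n\<^esub> g' <#\<^bsub>WDgrp n\<^esub> (g' <#\<^bsub>WDgrp n\<^esub> c0) = (inv\<^bsub>WDgrp n\<^esub> g' \<otimes>\<^bsub>WDgrp n\<^esub> g') <#\<^bsub>WDgrp n\<^esub> c0"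
      using W.lcos_m_assoc[OF c0c igc gc(2)] by simp
    also have "\<dots> = c0" using W.l_inv[OF gc(2)] W.lcos_mult_one[OF c0c] by simp
    finally have "k <#\<^bsub>WDgrp n\<^esub> c0 = c0" .
    then have fk: "f k = (\<lambda>j. k m0 j - m0 j)" using stab kH by blast
    have gg: "g = g' \<otimes>\<^bsub>WDgrp n\<^esub> k" unfolding k_def using gc igc by (simp add: W.m_assoc[symmetric] W.r_inv)
    have g'W: "g' \<in> WD n" using g'(1) HW by auto
    have "f g = f (g' \<circ> k)" using gg mult_eq by metis
    also have "\<dots> = (\<lambda>j. f g' j + g' (f k) j)" using fc g'(1) kH by blast
    also have "g' (f k) = (\<lambda>j. g' (k m0) j - g' m0 j)" unfolding fk by (rule WD_diff[OF g'W])
    also have "g' (k m0) = g m0" using gg mult_apply by metis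
    finally have "f g = (\<lambda>j. f g' j + (g m0 j - g' m0 j))" .
    then have "(\<lambda>j. g m0 j - f g j) = (\<lambda>j. g' m0 j - f g' j)" by auto
    moreover have "Mc (\<phi>a g c0) = (\<lambda>j. g' m0 j - f g' j)" unfolding Mc_def g'_def Let_def by simp
    ultimately show ?thesis by simp
  qed
  have orbE: "orb = {\<phi>a g c0 | g. g \<in> H}" unfolding c0(2) orbit_def by simp
  have orbX: "orb \<subseteq> X" unfolding orbE using A.element_image[OF _ c0(1)] by auto
  have finorb: "finite orb" using finite_subset[OF orbX finX] .
  have act: "\<phi>a h (\<phi>a g c0) = \<phi>a (h \<otimes>\<^bsub>WDgrp n\<^esub> g) c0" if "h \<in> H" "g \<in> H" for h g
    using A.composition_rule[OF c0(1), of h g] that by simp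
  have McL: "Mc c \<in> picL n" if cO: "c \<in> orb" for c
  proof -
    obtain g where g: "g \<in> H" "c = \<phi>a g c0" using cO orbE by auto
    have "g m0 \<in> picL n" using WD_picL g HW by auto
    then show ?thesis using Mc_eq[OF g(1)] fL g unfolding picL_def by auto
  qed
  define Z where "Z = (\<lambda>j. \<Sum>c\<in>orb. Mc c j)"
  have ZL: "Z \<in> picL n" using McL unfolding Z_def picL_def by auto
  define r where "r = card orb"
  have hZ: "h Z = (\<lambda>j. Z j + int r * f h j)" if h: "h \<in> H" for h
  proof -
    have hW: "h \<in> WD n" using h HW by auto
    have Mc_act: "h (Mc c) = (\<lambda>j. Mc (\<phi>a h c) j + f h j)" if cO: "c \<in> orb" for c
    proof -
      obtain g where g: "g \<in> H" "c = \<phi>a g c0" using cO orbE by auto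
      have hg: "h \<otimes>\<^bsub>WDgrp n\<^esub> g \<in> H" using subgroup.m_closed[OF H h g(1)] .
      have "Mc (\<phi>a h c) = (\<lambda>j. (h \<otimes>\<^bsub>WDgrp n\<^esub> g) m0 j - f (h \<otimes>\<^bsub>WDgrp n\<^esub> g) j)"
        unfolding g(2) act[OF h g(1)] by (rule Mc_eq[OF hg])
      also have "f (h \<otimes>\<^bsub>WDgrp n\<^esub> g) = (\<lambda>j. f h j + h (f g) j)" using fc h g(1) mult_eq by metis
      also have "(h \<otimes>\<^bsub>WDgrp n\<^esub> g) m0 = h (g m0)" by (rule mult_apply)
      finally have "Mc (\<phi>a h c) = (\<lambda>j. h (g m0) j - (f h j + h (f g) j))" .
      moreover have "h (Mc c) = (\<lambda>j. h (g m0) j - h (f g) j)" unfolding g(2) Mc_eq[OF g(1)] by (rule WD_diff[OF hW])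
      ultimately show ?thesis by auto
    qed
    have inj: "inj_on (\<phi>a h) orb" using A.inj_prop[of h] h orbX by (auto intro: inj_on_subset)
    have sub: "\<phi>a h ` orb \<subseteq> orb" unfolding orbE using act h subgroup.m_closed[OF H h] by auto
    have img: "\<phi>a h ` orb = orb" using endo_inj_surj[OF finorb sub inj] .
    have "h Z = (\<lambda>j. \<Sum>c\<in>orb. h (Mc c) j)" unfolding Z_def by (rule WD_sum[OF hW])
    also have "\<dots> = (\<lambda>j. \<Sum>c\<in>orb. Mc (\<phi>a h c) j + f h j)" using Mc_act by simp
    also have "\<dots> = (\<lambda>j. (\<Sum>c\<in>orb. Mc (\<phi>a h c) j) + int r * f h j)" by (simp add: sum.distrib r_def)
    also have "(\<lambda>j. \<Sum>c\<in>orb. Mc (\<phi>a h c) j) = Z"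
    proof
      fix j
      have "(\<Sum>c\<in>orb. Mc (\<phi>a h c) j) = (\<Sum>c\<in>\<phi>a h ` orb. Mc c j)"
        using sum.reindex[OF inj, of "\<lambda>c. Mc c j"] by simp
      then show "(\<Sum>c\<in>orb. Mc (\<phi>a h c) j) = Z j" unfolding img Z_def by simp
    qed
    finally show ?thesis .
  qed
  obtain M2 where M2: "M2 \<in> picL n" "\<forall>h\<in>H. (\<lambda>k. 2 * f h k) = (\<lambda>k. h M2 k - M2 k)"
    using two_cob[OF H fL fc] by blast
  obtain q where q: "r = 2 * q + 1" using orb(2) unfolding r_def by (metis oddE)
  define m where "m = (\<lambda>j. Z j - int q * M2 j)"
  have mL: "m \<in> picL n" using ZL M2(1) unfolding m_def picL_def by auto
  have "\<forall>h\<in>H. f h = (\<lambda>k. h m k - m k)"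
  proof
    fix h assume h: "h \<in> H"
    have hW: "h \<in> WD n" using h HW by auto
    have hm: "h m = (\<lambda>j. 1 * h Z j + (- int q) * h M2 j)"
      unfolding m_def using WD_lin[OF hW, of 1 Z "- int q" M2] by simp
    have e1: "h Z j = Z j + int r * f h j" for j using hZ[OF h] by (simp add: fun_eq_iff)
    have e2: "2 * f h j = h M2 j - M2 j" for j using M2(2) h by (simp add: fun_eq_iff)
    show "f h = (\<lambda>k. h m k - m k)"
    proof
      fix j
      have hmj: "h m j = h Z j - int q * h M2 j" using hm by simp
      have mj: "m j = Z j - int q * M2 j" unfolding m_def by simp
      have "h m j - m j = (h Z j - Z j) - int q * (h M2 j - M2 j)" unfolding hmj mj by (simp add: algebra_simps)
      also have "\<dots> = int r * f h j - int q * (2 * f h j)" using e1 e2 by simp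
      also have "\<dots> = f h j" unfolding q by (simp add: algebra_simps)
      finally show "f h j = h m j - m j" by simp
    qed
  qed
  then show "\<exists>m\<in>picL n. \<forall>g\<in>H. f g = (\<lambda>k. g m k - m k)" using mL by blast
qed


theorem lemma3p1:
  fixes n :: nat and G G2 :: "(pic \<Rightarrow> pic) set"
  assumes "subgroup G (WDgrp n)"
    and "sylow2 n G2 G"
  shows "H1_condition n G \<longleftrightarrow> H1_condition n G2"
proof -
  obtain a where G2: "subgroup G2 (WDgrp n)" "G2 \<subseteq> G" "card G2 = 2^a" "\<not> 2^Suc a dvd card G"
    using assms(2) unfolding sylow2_def by blast
  show ?thesis
  proof
    assume "H1_condition n G"
    then show "H1_condition n G2" using G2(2) unfolding H1_condition_def by blast
  next
    assume h: "H1_condition n G2"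
    show "H1_condition n G" unfolding H1_condition_def
      using H1_from_sylow[OF assms(1) G2(1) G2(2) G2(3) G2(4) h] by blast
  qed
qed

end
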